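(* Let $h$ be analytic in $\mathbb{D}=\{|z|<1\}$ and convex of order $1/2$, and let $u(z)=h(z)+\frac{1}{2}(1-|z|^{2})\,zh'(z)$. Then $u$ is univalent in $\mathbb{D}$.
   Context: A locally univalent analytic function $h$ in $\mathbb{D}$ is convex of order $\alpha$ if $\operatorname{Re}\big(1+zh''(z)/h'(z)\big)>\alpha$ for all $z\in\mathbb{D}$. *)

theory Defs
  imports "HOL-Complex_Analysis.Complex_Analysis"
begin

definition convex_of_order :: "real \<Rightarrow> (complex \<Rightarrow> complex) \<Rightarrow> bool" where
  "convex_of_order \<alpha> h \<longleftrightarrow>
     h holomorphic_on ball 0 1 \<and>
     (\<forall>z\<in>ball 0 1. deriv h z \<noteq> 0) \<and>
     (\<forall>z\<in>ball 0 1. Re (1 + z * deriv (deriv h) z / deriv h z) > \<alpha>)"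

end

theory Submission
  imports Defs
begin

locale cvx =
  fixes h :: "complex \<Rightarrow> complex"
  assumes hol: "h holomorphic_on ball 0 1"
    and nz: "\<And>z. z \<in> ball 0 1 \<Longrightarrow> deriv h z \<noteq> 0"
    and pos: "\<And>z. z \<in> ball 0 1 \<Longrightarrow> Re (1 + z * deriv (deriv h) z / deriv h z) > 0"
begin

definition p :: "complex \<Rightarrow> complex" where
  "p z = 1 + z * deriv (deriv h) z / deriv h z"

lemma hol1: "deriv h holomorphic_on ball 0 1"
  using hol by (simp add: holomorphic_deriv)

lemma dh: "z \<in> ball 0 1 \<Longrightarrow> (h has_field_derivative deriv h z) (at z)"
  using hol holomorphic_derivI[of h "ball 0 1" z UNIV] by simp

lemma ddh: "z \<in> ball 0 1 \<Longrightarrow> (deriv h has_field_derivative deriv (deriv h) z) (at z)"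
  using hol1 holomorphic_derivI[of "deriv h" "ball 0 1" z UNIV] by simp

lemma p_hol: "p holomorphic_on ball 0 1"
  unfolding p_def[abs_def]
  by (intro holomorphic_intros holomorphic_deriv hol1) (auto simp: nz)

lemma p_cont: "continuous_on (ball 0 1) p"
  using p_hol holomorphic_on_imp_continuous_on by blast

lemma h_cont: "continuous_on (ball 0 1) h"
  using hol holomorphic_on_imp_continuous_on by blast


lemma vd_Re: "(P has_vector_derivative D) F \<Longrightarrow> ((\<lambda>s. Re (P s)) has_real_derivative Re D) F"
proof -
  assume "(P has_vector_derivative D) F"
  then have "(P has_derivative (\<lambda>x. x *\<^sub>R D)) F" by (simp add: has_vector_derivative_def)
  from has_derivative_Re[OF this] have "((\<lambda>s. Re (P s)) has_derivative (\<lambda>x. Re (x *\<^sub>R D))) F" .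
  moreover have "(\<lambda>x. Re (x *\<^sub>R D)) = (*) (Re D)" by (auto simp: fun_eq_iff)
  ultimately show ?thesis by (simp add: has_field_derivative_def)
qed

lemma circle:
  fixes z0 :: complex and t :: real
  assumes r0: "0 < cmod z0" "cmod z0 < 1" and t: "0 < t" "t < 1"
  shows "Re (cnj (z0 * deriv h z0) * (h (z0 * exp (2 * of_real pi * \<i> * of_real t)) - h z0)) < 0"
proof -
  define E where "E w = z0 * exp (2 * of_real pi * \<i> * w)" for w
  define c where "c s = E (of_real s)" for s :: real
  have cnorm: "cmod (c s) = cmod z0" for s
    by (simp add: c_def E_def norm_mult)
  have cin: "c s \<in> ball 0 1" for s using cnorm r0 by simp
  have dE: "(E has_field_derivative (2 * of_real pi * \<i> * E w)) (at w)" for w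
    unfolding E_def by (auto intro!: derivative_eq_intros)
  define T where "T s = deriv h (c s) * (2 * of_real pi * \<i> * c s)" for s
  have dhc: "((\<lambda>s. h (c s)) has_vector_derivative T s) (at s within X)" for s X
  proof -
    have "((\<lambda>w. h (E w)) has_field_derivative deriv h (E (of_real s)) * (2 * of_real pi * \<i> * E (of_real s))) (at (of_real s))"
      using DERIV_chain2[OF dh[of "E (of_real s)"] dE] cin[of s] by (simp add: c_def)
    from has_vector_derivative_real_field[OF this] show ?thesis by (simp add: T_def c_def)
  qed
  define f where "f s = 2 * of_real pi * p (c s)" for s
  have dT: "(T has_vector_derivative (\<i> * f s * T s)) (at s within X)" for s X
  proof -
    define G where "G w = deriv h (E w) * (2 * of_real pi * \<i> * E w)" for w
    have "(G has_field_derivative (deriv (deriv h) (E (of_real s)) * (2 * of_real pi * \<i> * E (of_real s)) * (2 * of_real pi * \<i> * E (of_real s))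
       + deriv h (E (of_real s)) * (2 * of_real pi * \<i> * (2 * of_real pi * \<i> * E (of_real s))))) (at (of_real s))"
      unfolding G_def
      by (rule derivative_eq_intros DERIV_chain2[OF ddh dE] dE refl | use cin[of s] in \<open>simp add: c_def\<close>)+
    moreover have "deriv (deriv h) (E (of_real s)) * (2 * of_real pi * \<i> * E (of_real s)) * (2 * of_real pi * \<i> * E (of_real s))
       + deriv h (E (of_real s)) * (2 * of_real pi * \<i> * (2 * of_real pi * \<i> * E (of_real s))) = \<i> * f s * T s"
      using nz[OF cin[of s]] by (simp add: f_def T_def p_def c_def field_simps)
    ultimately have "(G has_field_derivative \<i> * f s * T s) (at (of_real s))" by simp
    from has_vector_derivative_real_field[OF this]
    have "((\<lambda>x. G (of_real x)) has_vector_derivative \<i> * f s * T s) (at s within X)" .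
    moreover have "(\<lambda>x. G (of_real x)) = T" by (simp add: fun_eq_iff T_def G_def c_def)
    ultimately show ?thesis by simp
  qed
  have fcont: "continuous_on S f" for S
  proof -
    have "continuous_on S c" unfolding c_def E_def by (intro continuous_intros)
    moreover have "continuous_on (c ` S) p" using p_cont by (rule continuous_on_subset) (use cin in auto)
    ultimately have "continuous_on S (p \<circ> c)" by (rule continuous_on_compose)
    then show ?thesis unfolding f_def by (intro continuous_intros) (simp add: o_def)
  qed
  define P where "P s = integral {0..s} f" for s
  have dP: "s \<in> {0..1} \<Longrightarrow> (P has_vector_derivative f s) (at s within {0..1})" for s
    unfolding P_def[abs_def] by (rule integral_has_vector_derivative[OF fcont])
  have P0: "P 0 = 0" by (simp add: P_def)
  define Q where "Q s = T s * exp (- (\<i> * P s))" for s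
  have dQ: "(Q has_vector_derivative 0) (at s within {0..1})" if "s \<in> {0..1}" for s
  proof -
    have e: "((\<lambda>s. exp (- (\<i> * P s))) has_vector_derivative (- (\<i> * f s)) * exp (- (\<i> * P s))) (at s within {0..1})"
    proof -
      have "((\<lambda>s. - (\<i> * P s)) has_vector_derivative - (\<i> * f s)) (at s within {0..1})"
        by (intro derivative_intros dP that)
      from field_vector_diff_chain_within[OF this, of exp "exp (- (\<i> * P s))"]
      show ?thesis by (simp add: o_def DERIV_exp has_field_derivative_at_within)
    qed
    have "(Q has_vector_derivative (T s * ((- (\<i> * f s)) * exp (- (\<i> * P s))) + (\<i> * f s * T s) * exp (- (\<i> * P s)))) (at s within {0..1})"
      unfolding Q_def[abs_def] by (rule has_vector_derivative_mult[OF dT e])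
    moreover have "T s * ((- (\<i> * f s)) * exp (- (\<i> * P s))) + (\<i> * f s * T s) * exp (- (\<i> * P s)) = 0"
      by (simp add: algebra_simps)
    ultimately show ?thesis by simp
  qed
  obtain k where k: "\<And>s. s \<in> {0..1} \<Longrightarrow> Q s = k"
    using has_vector_derivative_zero_constant[of "{0..1::real}" Q] dQ by auto
  have Qk: "k = T 0" using k[of 0] by (simp add: Q_def P0)
  have TP: "T s = T 0 * exp (\<i> * P s)" if "s \<in> {0..1}" for s
  proof -
    have "T s = Q s * exp (\<i> * P s)" by (simp add: Q_def mult.assoc exp_minus_inverse exp_minus[symmetric] flip: exp_add)
    then show ?thesis using k[OF that] Qk by simp
  qed
  define r where "r = cmod z0"
  define u0 where "u0 = z0 / of_real r"
  have u0n: "cmod u0 = 1" using r0 by (simp add: u0_def r_def norm_divide)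
  have u0r: "u0 * of_real r = z0" using r0 by (simp add: u0_def r_def)
  define q where "q z = p (u0 * z)" for z
  have qin: "u0 * z \<in> ball 0 1" if "z \<in> cball 0 r" for z
    using that r0 u0n by (simp add: norm_mult r_def)
  have "continuous_on (cball 0 r) q"
  proof -
    have "continuous_on (cball 0 r) ((\<lambda>z. u0 * z))" by (intro continuous_intros)
    moreover have "continuous_on ((\<lambda>z. u0 * z) ` cball 0 r) p" using p_cont by (rule continuous_on_subset) (use qin in auto)
    ultimately show ?thesis unfolding q_def[abs_def] using continuous_on_compose[of _ "\<lambda>z. u0 * z" p] by (simp add: o_def)
  qed
  moreover have "q holomorphic_on ball 0 r"
  proof -
    have "(\<lambda>z. u0 * z) holomorphic_on ball 0 r" by (intro holomorphic_intros)
    moreover have "p holomorphic_on ((\<lambda>z. u0 * z) ` ball 0 r)" using p_hol by (rule holomorphic_on_subset) (use qin in auto)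
    ultimately show ?thesis unfolding q_def[abs_def] using holomorphic_on_compose[of "\<lambda>z. u0 * z" _ p] by (simp add: o_def)
  qed
  ultimately have "((\<lambda>u. q u / (u - 0)) has_contour_integral (2 * of_real pi * \<i> * q 0)) (circlepath 0 r)"
    using r0 by (intro Cauchy_integral_circlepath) (auto simp: r_def)
  then have "((\<lambda>x. q (circlepath 0 r x) / (circlepath 0 r x - 0) * vector_derivative (circlepath 0 r) (at x)) has_integral (2 * of_real pi * \<i>)) {0..1}"
    by (simp add: has_contour_integral q_def p_def)
  moreover have "q (circlepath 0 r x) / (circlepath 0 r x - 0) * vector_derivative (circlepath 0 r) (at x) = (2 * of_real pi * \<i>) * p (c x)" for x
  proof -
    have "q (circlepath 0 r x) = p (c x)" by (simp add: q_def circlepath c_def E_def flip: u0r) (simp add: algebra_simps)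
    moreover have "exp (2 * of_real pi * \<i> * of_real x) \<noteq> 0" by simp
    ultimately show ?thesis using r0 unfolding vector_derivative_circlepath
      by (simp add: circlepath r_def field_simps)
  qed
  ultimately have "((\<lambda>x. (2 * of_real pi * \<i>) * p (c x)) has_integral (2 * of_real pi * \<i>) * 1) {0..1}" by simp
  from has_integral_mult_right[OF this, of "1 / \<i>"]
  have "((\<lambda>x. f x) has_integral (2 * of_real pi)) {0..1}"
    by (simp add: f_def algebra_simps)
  then have P1: "P 1 = 2 * of_real pi" by (simp add: P_def integral_unique)
  have fpos: "Re (f s) > 0" for s using pos[OF cin[of s]] by (simp add: f_def p_def)
  have Pmono: "Re (P x) < Re (P y)" if "0 \<le> x" "x < y" "y \<le> 1" for x y
  proof -
    have "continuous_on {0..1} P"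
      using dP by (rule continuous_on_vector_derivative)
    then have "continuous_on {x..y} (\<lambda>s. Re (P s))"
      by (intro continuous_intros) (rule continuous_on_subset, use that in auto)
    moreover have "(\<lambda>s. Re (P s)) differentiable (at z)" if "x < z" "z < y" for z
    proof -
      have "(P has_vector_derivative f z) (at z within {0..1})" using dP \<open>0 \<le> x\<close> \<open>y \<le> 1\<close> that by auto
      then have "(P has_vector_derivative f z) (at z)" using at_within_Icc_at[of 0 z 1] \<open>0 \<le> x\<close> \<open>y \<le> 1\<close> that by auto
      from vd_Re[OF this] show ?thesis by (auto simp: real_differentiable_def)
    qed
    ultimately obtain l z where z: "x < z" "z < y" "DERIV (\<lambda>s. Re (P s)) z :> l" "Re (P y) - Re (P x) = (y - x) * l"
      using MVT[OF \<open>x < y\<close>] by blast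
    have "(P has_vector_derivative f z) (at z within {0..1})" using dP \<open>0 \<le> x\<close> \<open>y \<le> 1\<close> z by auto
    then have "(P has_vector_derivative f z) (at z)" using at_within_Icc_at[of 0 z 1] \<open>0 \<le> x\<close> \<open>y \<le> 1\<close> z by auto
    from vd_Re[OF this] z(3) have "l = Re (f z)" using DERIV_unique by blast
    with z fpos[of z] have "(y - x) * l > 0" by simp
    with z(4) show ?thesis by linarith
  qed
  define n0 where "n0 = z0 * deriv h z0"
  have z0in: "z0 \<in> ball 0 1" using r0 by simp
  have n0nz: "n0 \<noteq> 0" using nz[OF z0in] r0 by (auto simp: n0_def)
  have c0: "c 0 = z0" by (simp add: c_def E_def)
  have c1: "c 1 = z0" by (simp add: c_def E_def)
  define \<psi> where "\<psi> s = Re (cnj n0 * (h (c s) - h z0))" for s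
  have d\<psi>: "DERIV \<psi> s :> Re (cnj n0 * T s)" for s
  proof -
    have "((\<lambda>s. cnj n0 * (h (c s) - h z0)) has_vector_derivative cnj n0 * (T s - 0)) (at s)"
      by (intro derivative_intros dhc)
    from vd_Re[OF this] show ?thesis by (simp add: \<psi>_def[abs_def])
  qed
  have T0: "T 0 = 2 * of_real pi * \<i> * n0" by (simp add: T_def c0 n0_def)
  have d\<psi>': "Re (cnj n0 * T s) = - (2 * pi * (cmod n0)^2 * exp (- Im (P s))) * sin (Re (P s))" if "s \<in> {0..1}" for s
  proof -
    have "cnj n0 * T s = 2 * of_real pi * \<i> * (cnj n0 * n0) * exp (\<i> * P s)"
      using TP[OF that] T0 by simp
    also have "cnj n0 * n0 = of_real ((cmod n0)^2)" by (metis complex_norm_square mult.commute)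
    finally show ?thesis by (simp add: Im_exp)
  qed
  have \<psi>0: "\<psi> 0 = 0" by (simp add: \<psi>_def c0)
  have \<psi>1: "\<psi> 1 = 0" by (simp add: \<psi>_def c1)
  have "\<psi> t < 0"
  proof (cases "Re (P t) \<le> pi")
    case True
    obtain z where z: "0 < z" "z < t" "\<psi> t - \<psi> 0 = (t - 0) * Re (cnj n0 * T z)"
      using MVT2[OF \<open>0 < t\<close> d\<psi>] by blast
    have "Re (P 0) < Re (P z)" "Re (P z) < Re (P t)" using Pmono z t by auto
    then have "sin (Re (P z)) > 0" using True P0 by (intro sin_gt_zero) auto
    moreover have "Re (cnj n0 * T z) = - (2 * pi * (cmod n0)^2 * exp (- Im (P z))) * sin (Re (P z))"
      using d\<psi>' z t by auto
    moreover have "2 * pi * (cmod n0)^2 * exp (- Im (P z)) > 0" using n0nz by simp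
    ultimately have "Re (cnj n0 * T z) < 0" by (simp add: mult_pos_pos)
    with z \<psi>0 show ?thesis by (simp add: mult_pos_neg)
  next
    case False
    obtain z where z: "t < z" "z < 1" "\<psi> 1 - \<psi> t = (1 - t) * Re (cnj n0 * T z)"
      using MVT2[OF \<open>t < 1\<close> d\<psi>] by blast
    have "Re (P t) < Re (P z)" "Re (P z) < Re (P 1)" using Pmono z t by auto
    then have "sin (Re (P z)) < 0" using False P1 by (intro sin_lt_zero) auto
    moreover have "Re (cnj n0 * T z) = - (2 * pi * (cmod n0)^2 * exp (- Im (P z))) * sin (Re (P z))"
      using d\<psi>' z t by auto
    moreover have "2 * pi * (cmod n0)^2 * exp (- Im (P z)) > 0" using n0nz by simp
    ultimately have "Re (cnj n0 * T z) > 0" by (simp add: mult_pos_neg)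
    moreover have "(1 - t) > 0" using t by simp
    ultimately have "(1 - t) * Re (cnj n0 * T z) > 0" by (rule mult_pos_pos[rotated])
    with z(3) \<psi>1 show ?thesis by linarith
  qed
  then show ?thesis by (simp add: \<psi>_def n0_def c_def E_def)
qed




lemma SL_sphere:
  assumes r0: "0 < cmod z0" "cmod z0 < 1" and "cmod z = cmod z0" "z \<noteq> z0"
  shows "Re (cnj (z0 * deriv h z0) * (h z - h z0)) < 0"
proof -
  define w where "w = z / z0"
  have z0nz: "z0 \<noteq> 0" using r0 by auto
  have wn: "cmod w = 1" using assms by (simp add: w_def norm_divide)
  have w1: "w \<noteq> 1" using assms z0nz by (auto simp: w_def)
  have wcis: "cis (Arg w) = w" 
  proof -
    have "w \<noteq> 0" using wn by auto
    then show ?thesis using cis_Arg[of w] wn by (simp add: sgn_div_norm)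
  qed
  have A: "Arg w \<noteq> 0"
  proof
    assume "Arg w = 0"
    then have "cis (Arg w) = 1" by simp
    with wcis w1 show False by simp
  qed
  have B: "- pi < Arg w" "Arg w \<le> pi" using Arg_bounded[of w] by auto
  define t where "t = (if Arg w > 0 then Arg w / (2*pi) else Arg w / (2*pi) + 1)"
  have t: "0 < t" "t < 1" using A B by (auto simp: t_def field_simps)
  have "exp (2 * of_real pi * \<i> * of_real t) = cis (Arg w)"
  proof (cases "Arg w > 0")
    case True then show ?thesis by (simp add: t_def cis_conv_exp algebra_simps)
  next
    case False
    have "exp (2 * of_real pi * \<i> * of_real t) = exp (\<i> * of_real (Arg w) + 2 * of_real pi * \<i>)"
      using False by (simp add: t_def algebra_simps)
    also have "\<dots> = cis (Arg w)" by (simp add: exp_add cis_conv_exp)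
    finally show ?thesis .
  qed
  then have "z = z0 * exp (2 * of_real pi * \<i> * of_real t)" using wcis z0nz by (simp add: w_def)
  with circle[OF r0 t] show ?thesis by simp
qed

lemma SL:
  assumes r0: "0 < cmod z0" "cmod z0 < 1" and zle: "cmod z \<le> cmod z0" and zz: "z \<noteq> z0"
  shows "Re (cnj (z0 * deriv h z0) * (h z - h z0)) < 0"
proof (cases "cmod z = cmod z0")
  case True then show ?thesis using SL_sphere assms by blast
next
  case False
  define r where "r = cmod z0"
  define F where "F w = cnj (z0 * deriv h z0) * (h w - h z0)" for w
  have sub: "cball 0 r \<subseteq> ball 0 1" using r0 by (auto simp: r_def)
  have Fhol: "F holomorphic_on ball 0 1" unfolding F_def[abs_def] by (intro holomorphic_intros hol)
  have le: "Re (F w) \<le> 0" if "w \<in> cball 0 r" for w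
  proof -
    have "norm (exp (F w)) \<le> 1"
    proof (rule maximum_modulus_frontier[where S = "cball 0 r" and f = "\<lambda>w. exp (F w)"])
      show "(\<lambda>w. exp (F w)) holomorphic_on interior (cball 0 r)"
        using Fhol sub by (intro holomorphic_intros) (auto intro: holomorphic_on_subset[OF _ ball_subset_cball[THEN subset_trans]])
      show "continuous_on (closure (cball 0 r)) (\<lambda>w. exp (F w))"
        using Fhol sub by (intro continuous_intros) (auto intro: holomorphic_on_subset holomorphic_on_imp_continuous_on)
      show "bounded (cball 0 r)" by simp
      show "w \<in> cball 0 r" by fact
      fix v :: complex assume "v \<in> frontier (cball 0 r)"
      then have v: "cmod v = r" using r0 by (simp add: r_def frontier_cball)
      show "norm (exp (F v)) \<le> 1"
      proof (cases "v = z0")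
        case True then show ?thesis by (simp add: F_def)
      next
        case False
        then have "Re (F v) < 0" using SL_sphere[OF r0, of v] v by (simp add: F_def r_def)
        then show ?thesis by simp
      qed
    qed
    then show ?thesis by simp
  qed
  have nc: "\<not> F constant_on ball 0 r"
  proof
    assume "F constant_on ball 0 r"
    then obtain k where k: "\<And>w. w \<in> ball 0 r \<Longrightarrow> F w = k" by (auto simp: constant_on_def)
    have n0: "cnj (z0 * deriv h z0) \<noteq> 0" using nz[of z0] r0 by auto
    have "deriv h 0 = deriv (\<lambda>_. h z0 + k / cnj (z0 * deriv h z0)) 0"
    proof (rule complex_derivative_transform_within_open[where s = "ball 0 r"])
      show "h holomorphic_on ball 0 r" using hol sub by (meson ball_subset_cball holomorphic_on_subset subset_trans)
      show "(\<lambda>_. h z0 + k / cnj (z0 * deriv h z0)) holomorphic_on ball 0 r" by simp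
      show "0 \<in> ball (0::complex) r" using r0 by (simp add: r_def)
      fix w :: complex assume "w \<in> ball 0 r"
      from k[OF this] n0 show "h w = h z0 + k / cnj (z0 * deriv h z0)" by (simp add: F_def field_simps)
    qed simp
    then have "deriv h 0 = 0" by simp
    with nz[of 0] show False by simp
  qed
  have zin: "z \<in> ball 0 r" using zle False by (simp add: r_def)
  show ?thesis
  proof (rule ccontr)
    assume "\<not> ?thesis"
    then have "Re (F z) \<ge> 0" by (simp add: F_def)
    have "open (F ` ball 0 r)"
    proof (rule open_mapping_thm[OF _ _ _ _ _ nc])
      show "F holomorphic_on ball 0 r" using Fhol sub by (meson ball_subset_cball holomorphic_on_subset subset_trans)
    qed auto
    then obtain e where e: "e > 0" "ball (F z) e \<subseteq> F ` ball 0 r"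
      using zin by (meson imageI openE)
    then have "F z + of_real (e/2) \<in> F ` ball 0 r" by (auto simp: dist_norm)
    then obtain v where v: "v \<in> ball 0 r" "F v = F z + of_real (e/2)" by auto
    have "Re (F v) > 0" using v e \<open>Re (F z) \<ge> 0\<close> by simp
    moreover have "Re (F v) \<le> 0" using le[of v] v(1) by simp
    ultimately show False by simp
  qed
qed


lemma h_inj: "inj_on h (ball 0 1)"
proof -
  have *: "h a \<noteq> h b" if "a \<in> ball 0 1" "b \<in> ball 0 1" "a \<noteq> b" "cmod b \<le> cmod a" for a b
  proof -
    have "0 < cmod a" using that by auto
    then have "Re (cnj (a * deriv h a) * (h b - h a)) < 0" using SL[of a b] that by auto
    then show ?thesis by auto
  qed
  show ?thesis unfolding inj_on_def by (metis * linear)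
qed

lemma seg:
  assumes r: "0 < r" "r < 1" and a: "cmod a < r" and b: "cmod b < r" and u: "0 \<le> u" "u \<le> 1"
  shows "h b + of_real u * (h a - h b) \<in> h ` ball 0 r"
proof -
  define W where "W = (\<lambda>u. h b + of_real u * (h a - h b)) ` {0..1}"
  define T where "T = h ` ball 0 r"
  have sub: "cball 0 r \<subseteq> ball 0 1" using r by auto
  have "connected W" unfolding W_def by (intro connected_continuous_image continuous_intros) auto
  have "open T" unfolding T_def
  proof (rule open_mapping_thm3)
    have "ball 0 r \<subseteq> ball (0::complex) 1" using r by auto
    then show "h holomorphic_on ball 0 r" "inj_on h (ball 0 r)"
      using hol h_inj by (auto intro: holomorphic_on_subset inj_on_subset)
  qed auto
  have "h b \<in> W \<inter> T" using b unfolding W_def T_def by (auto intro!: image_eqI[where x=0])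
  have clos: "closure T \<subseteq> h ` cball 0 r"
  proof (rule closure_minimal)
    show "T \<subseteq> h ` cball 0 r" unfolding T_def by auto
    have "compact (h ` cball 0 r)"
      by (rule compact_continuous_image) (use h_cont sub in \<open>auto intro: continuous_on_subset\<close>)
    then show "closed (h ` cball 0 r)" by (rule compact_imp_closed)
  qed
  have "W \<subseteq> T"
  proof (rule ccontr)
    assume "\<not> W \<subseteq> T"
    then have "W - T \<noteq> {}" by auto
    from connected_Int_frontier[OF \<open>connected W\<close> _ this] \<open>h b \<in> W \<inter> T\<close>
    obtain w where w: "w \<in> W" "w \<in> frontier T" by auto
    then have "w \<in> closure T" "w \<notin> T" using \<open>open T\<close> by (auto simp: frontier_def interior_open)
    then obtain v where v: "cmod v \<le> r" "w = h v" using clos by auto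
    have vr: "cmod v = r" using v \<open>w \<notin> T\<close> unfolding T_def by (metis image_eqI mem_ball_0 order_less_le)
    then have v0: "0 < cmod v" "cmod v < 1" using r by auto
    define n where "n = cnj (v * deriv h v)"
    have A: "Re (n * (h a - h v)) < 0" using SL[OF v0, of a] a vr by (auto simp: n_def)
    have B: "Re (n * (h b - h v)) < 0" using SL[OF v0, of b] b vr by (auto simp: n_def)
    obtain t where t: "0 \<le> t" "t \<le> 1" "w = h b + of_real t * (h a - h b)" using w(1) by (auto simp: W_def)
    have "n * (w - h v) = (1 - t) * (n * (h b - h v)) + t * (n * (h a - h v))"
      unfolding t(3) by (simp add: algebra_simps)
    then have "Re (n * (w - h v)) = (1 - t) * Re (n * (h b - h v)) + t * Re (n * (h a - h v))" by simp
    also have "\<dots> < 0" using A B t by (intro convex_bound_lt) auto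
    finally show False using v by simp
  qed
  moreover have "h b + of_real u * (h a - h b) \<in> W" using u unfolding W_def by auto
  ultimately show ?thesis unfolding T_def by blast
qed


lemma U_inj: "inj_on (\<lambda>z. h z + (1/2) * complex_of_real (1 - (cmod z)^2) * z * deriv h z) (ball 0 1)"
proof (rule inj_onI, rule ccontr)
  fix a b assume ab: "a \<in> ball 0 1" "b \<in> ball 0 1"
    and eq: "h a + (1/2) * complex_of_real (1 - (cmod a)^2) * a * deriv h a =
             h b + (1/2) * complex_of_real (1 - (cmod b)^2) * b * deriv h b" and "a \<noteq> b"
  define U where "U z = h z + (1/2) * (1 - z * cnj z) * z * deriv h z" for z
  have Ueq: "h z + (1/2) * complex_of_real (1 - (cmod z)^2) * z * deriv h z = U z" for z
    unfolding U_def complex_norm_square[symmetric] by simp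
  obtain g where g: "g holomorphic_on (h ` ball 0 1)"
      "\<And>z. z \<in> ball 0 1 \<Longrightarrow> deriv h z * deriv g (h z) = 1"
      "\<And>z. z \<in> ball 0 1 \<Longrightarrow> g (h z) = z"
    using holomorphic_has_inverse[OF hol open_ball h_inj] by blast
  have oi: "open (h ` ball 0 1)" by (rule open_mapping_thm3[OF hol open_ball h_inj])
  define r where "r = (max (cmod a) (cmod b) + 1) / 2"
  have r: "0 < r" "r < 1" "cmod a < r" "cmod b < r" using ab norm_ge_zero[of a] norm_ge_zero[of b] unfolding r_def mem_ball_0 by argo+
  define d where "d = h a - h b"
  have dnz: "d \<noteq> 0" using h_inj ab \<open>a \<noteq> b\<close> by (auto simp: d_def inj_on_def)
  define \<gamma> where "\<gamma> x = g (h b + of_real x * d)" for x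
  have \<gamma>in: "\<gamma> x \<in> ball 0 1 \<and> h (\<gamma> x) = h b + of_real x * d" if "x \<in> {0..1}" for x
  proof -
    have "h b + of_real x * d \<in> h ` ball 0 r" using seg[OF r(1,2,3,4), of x] that by (simp add: d_def)
    then obtain z where z: "z \<in> ball 0 r" "h z = h b + of_real x * d" by (metis imageE)
    then have "z \<in> ball 0 1" using r by auto
    then show ?thesis using z g(3)[of z] by (simp add: \<gamma>_def)
  qed
  have \<gamma>0: "\<gamma> 0 = b" using g(3)[OF ab(2)] by (simp add: \<gamma>_def)
  have \<gamma>1: "\<gamma> 1 = a" using g(3)[OF ab(1)] by (simp add: \<gamma>_def d_def)
  have d\<gamma>: "(\<gamma> has_vector_derivative d / deriv h (\<gamma> x)) (at x)" if x: "x \<in> {0..1}" for x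
  proof -
    define z where "z = \<gamma> x"
    have z: "z \<in> ball 0 1" "h z = h b + of_real x * d" using \<gamma>in[OF x] by (auto simp: z_def)
    have win: "h b + of_real x * d \<in> h ` ball 0 1" using z by (metis imageI)
    have dg: "deriv g (h z) = 1 / deriv h z" using g(2)[OF z(1)] nz[OF z(1)] by (simp add: field_simps)
    have "(g has_field_derivative deriv g (h b + of_real x * d)) (at (h b + of_real x * d))"
      using holomorphic_derivI[OF g(1) oi win] .
    then have "((\<lambda>w. g (h b + w * d)) has_field_derivative deriv g (h b + of_real x * d) * d) (at (of_real x))"
      by (rule DERIV_chain2) (auto intro!: derivative_eq_intros)
    from has_vector_derivative_real_field[OF this]
    have "((\<lambda>x. g (h b + of_real x * d)) has_vector_derivative deriv g (h b + of_real x * d) * d) (at x)" .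
    moreover have "\<gamma> = (\<lambda>x. g (h b + of_real x * d))" by (simp add: fun_eq_iff \<gamma>_def)
    moreover have "deriv g (h b + of_real x * d) = 1 / deriv h (\<gamma> x)" using dg z by (simp add: z_def)
    ultimately show ?thesis by simp
  qed
  define \<phi> where "\<phi> x = Re (cnj d * U (\<gamma> x))" for x
  have d\<phi>: "\<exists>D. DERIV \<phi> x :> D \<and> D > 0" if x: "x \<in> {0..1}" for x
  proof -
    define z where "z = \<gamma> x"
    have z: "z \<in> ball 0 1" using \<gamma>in[OF x] by (auto simp: z_def)
    define k where "k = deriv h z"
    define k2 where "k2 = deriv (deriv h) z"
    define v where "v = d / k"
    have knz: "k \<noteq> 0" using nz[OF z] by (simp add: k_def)
    have dg: "(\<gamma> has_vector_derivative v) (at x)" using d\<gamma>[OF x] by (simp add: v_def k_def z_def)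
    have dh\<gamma>: "((\<lambda>x. h (\<gamma> x)) has_vector_derivative d) (at x)"
      using field_vector_diff_chain_at[OF dg dh[OF z[unfolded z_def]]] knz by (simp add: o_def v_def k_def z_def)
    have dk\<gamma>: "((\<lambda>x. deriv h (\<gamma> x)) has_vector_derivative v * k2) (at x)"
      using field_vector_diff_chain_at[OF dg ddh[OF z[unfolded z_def]]] by (simp add: o_def k2_def z_def)
    define DU where "DU = d + (1/2 * (1 - z * cnj z) * z * (v * k2) + (1/2 * (1 - z * cnj z) * v + (1/2 * (- (z * cnj v + v * cnj z))) * z) * k)"
    have "((\<lambda>x. U (\<gamma> x)) has_vector_derivative DU) (at x)"
      unfolding U_def
      apply (rule has_vector_derivative_eq_rhs)
       apply (rule derivative_intros dh\<gamma> dk\<gamma> dg | simp only: z_def[symmetric] k_def[symmetric])+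
      apply (simp add: DU_def)
      done
    then have "((\<lambda>x. cnj d * U (\<gamma> x)) has_vector_derivative cnj d * DU) (at x)"
      by (rule derivative_intros)
    from vd_Re[OF this] have D1: "DERIV \<phi> x :> Re (cnj d * DU)" by (simp add: \<phi>_def[abs_def])
    define X where "X = z * cnj v"
    have vk: "v * k = d" using knz by (simp add: v_def)
    have A1: "z * cnj v + v * cnj z = of_real (2 * Re X)"
      using complex_add_cnj[of X] by (simp add: X_def mult.commute)
    have A2: "z * cnj z = of_real ((cmod z)^2)" by (rule complex_norm_square[symmetric])
    have A3: "z * (v * k2) = d * (p z - 1)" using knz by (simp add: p_def v_def k_def k2_def field_simps)
    have e1: "DU = d + of_real (1/2 * (1 - (cmod z)^2)) * d * p z - of_real (Re X) * z * k"
    proof -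
      have "DU = d + (1/2 * (1 - of_real ((cmod z)^2)) * (d * (p z - 1)) + (1/2 * (1 - of_real ((cmod z)^2)) * (v * k) - (1/2 * of_real (2 * Re X)) * z * k))"
        unfolding DU_def A2[symmetric] A3[symmetric] A1[symmetric] by (simp add: algebra_simps)
      then show ?thesis unfolding vk by (simp add: field_simps) algebra
    qed
    have e2: "cnj d * z * k = X * of_real ((cmod k)^2)"
      unfolding vk[symmetric] X_def complex_norm_square by (simp add: algebra_simps)
    have "cnj d * DU = of_real ((cmod d)^2) + of_real (1/2 * (1 - (cmod z)^2) * (cmod d)^2) * p z - of_real (Re X * (cmod k)^2) * X"
    proof -
      have "cnj d * DU = cnj d * d + of_real (1/2 * (1 - (cmod z)^2)) * (cnj d * d) * p z - of_real (Re X) * (cnj d * z * k)"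
        unfolding e1 by (simp add: algebra_simps)
      also have "cnj d * d = of_real ((cmod d)^2)" by (metis complex_norm_square mult.commute)
      finally show ?thesis unfolding e2 by (simp add: algebra_simps)
    qed
    then have ReD: "Re (cnj d * DU) = (cmod d)^2 + 1/2 * (1 - (cmod z)^2) * (cmod d)^2 * Re (p z) - (Re X)^2 * (cmod k)^2"
      by (simp add: power2_eq_square)
    have "(Re X)^2 \<le> (cmod X)^2" using abs_Re_le_cmod[of X] by (metis abs_le_square_iff abs_norm_cancel)
    then have "(Re X)^2 * (cmod k)^2 \<le> (cmod X)^2 * (cmod k)^2" by (simp add: mult_right_mono)
    also have "(cmod X)^2 * (cmod k)^2 = (cmod z)^2 * (cmod d)^2"
      unfolding vk[symmetric] X_def by (simp add: norm_mult power_mult_distrib)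
    finally have B1: "(Re X)^2 * (cmod k)^2 \<le> (cmod z)^2 * (cmod d)^2" .
    have zl: "(cmod z)^2 < 1" using z by (simp add: power_less_one_iff)
    have dp: "(cmod d)^2 > 0" using dnz by simp
    have "1/2 * (1 - (cmod z)^2) * (cmod d)^2 * Re (p z) \<ge> 0"
      using pos[OF z] zl dp by (simp add: p_def k_def k2_def)
    moreover have "(cmod d)^2 - (cmod z)^2 * (cmod d)^2 > 0"
    proof -
      have "(1 - (cmod z)^2) * (cmod d)^2 > 0" using zl dp by simp
      then show ?thesis by (simp add: algebra_simps)
    qed
    ultimately have "Re (cnj d * DU) > 0" using ReD B1 by linarith
    with D1 show ?thesis by blast
  qed
  define \<phi>' where "\<phi>' x = (SOME D. DERIV \<phi> x :> D \<and> D > 0)" for x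
  have \<phi>'D: "DERIV \<phi> x :> \<phi>' x \<and> \<phi>' x > 0" if "0 \<le> x" "x \<le> 1" for x
  proof -
    have "x \<in> {0..1}" using that by simp
    from d\<phi>[OF this] show ?thesis unfolding \<phi>'_def by (rule someI_ex)
  qed
  obtain \<xi> where \<xi>: "0 < \<xi>" "\<xi> < 1" "\<phi> 1 - \<phi> 0 = (1 - 0) * \<phi>' \<xi>"
    using MVT2[of 0 1 \<phi> \<phi>'] \<phi>'D by auto
  have "U a = U b" using eq unfolding Ueq .
  then have "\<phi> 1 = \<phi> 0" unfolding \<phi>_def \<gamma>0 \<gamma>1 by simp
  with \<xi> \<phi>'D[of \<xi>] show False by simp
qed

end

theorem corollary3:
  fixes h :: "complex \<Rightarrow> complex"
  assumes "h holomorphic_on ball 0 1"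
    and "convex_of_order (1/2) h"
  shows "inj_on (\<lambda>z. h z + (1/2) * complex_of_real (1 - (cmod z)^2) * z * deriv h z) (ball 0 1)"
proof -
  interpret cvx h
  proof
    show "h holomorphic_on ball 0 1" by fact
    show "\<And>z. z \<in> ball 0 1 \<Longrightarrow> deriv h z \<noteq> 0" using assms(2) by (auto simp: convex_of_order_def)
    fix z :: complex assume "z \<in> ball 0 1"
    then have "Re (1 + z * deriv (deriv h) z / deriv h z) > 1/2" using assms(2) by (auto simp: convex_of_order_def)
    then show "Re (1 + z * deriv (deriv h) z / deriv h z) > 0" by linarith
  qed
  show ?thesis by (rule U_inj)
qed

end
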